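(* Let $X$ be a connected compact metrizable space and let $\Delta:\mathrm{C}^+_1(X)\to(0,1]$ be an order-preserving map. Then for every finite set $\mathcal F\subseteq\mathrm{C}(X)$ and every $\varepsilon>0$ there exist finite sets $\mathcal H_0,\mathcal H_1\subseteq\mathrm{C}^+_1(X)$, with $\mathcal H_0$ consisting of nonzero functions, and $\delta>0$ with the following property. Whenever $n,k,d\ge1$, $\pi_1,\dots,\pi_n:X^d\to X$ are coordinate projections (repetitions allowed), $x_1,\dots,x_k,y_1,\dots,y_k\in X$, and $\phi_0,\phi_1:\mathrm{C}(X)\to\mathrm{M}_{n+k}(\mathrm{C}(X^d))$ are the unital homomorphisms $$\phi_0(f)=\mathrm{diag}(f\circ\pi_1,\dots,f\circ\pi_n,f(x_1),\dots,f(x_k)),\quad \phi_1(f)=\mathrm{diag}(f\circ\pi_1,\dots,f\circ\pi_n,f(y_1),\dots,f(y_k)),$$ such that $\tau(\phi_0(h))>\Delta(h)$ and $\tau(\phi_1(h))>\Delta(h)$ for all $h\in\mathcal H_0$ and all $\tau\in\mathrm{T}(\mathrm{M}_{n+k}(\mathrm{C}(X^d)))$, and $|\tau(\phi_0(h)-\phi_1(h))|<\delta$ for all $h\in\mathcal H_1$ and all $\tau\in\mathrm{T}(\mathrm{M}_{n+k}(\mathrm{C}(X^d)))$, there is a unitary $u\in\mathrm{M}_{n+k}(\mathrm{C}(X^d))$ with $\|\phi_0(f)-u^*\phi_1(f)u\|<\varepsilon$ for all $f\in\mathcal F$.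
   Context: $\mathrm{C}^+_1(X)$ is the set of positive functions in $\mathrm{C}(X)$ of norm at most $1$. A coordinate projection $X^d\to X$ is a map $(z_1,\dots,z_d)\mapsto z_j$. Constants $f(x)$ are regarded as constant functions. $\mathrm{T}(B)$ denotes the tracial state space of $B$. *)

theory Defs
  imports "HOL-Analysis.Analysis"
begin

text \<open>C(X): continuous complex-valued functions on X (here X is the whole type 'a).\<close>
definition CX :: "('a::topological_space \<Rightarrow> complex) set" where
  "CX = {f. continuous_on UNIV f}"

definition C1pos :: "('a::topological_space \<Rightarrow> complex) set" where
  "C1pos = {f. continuous_on UNIV f \<and>
              (\<forall>x. Im (f x) = 0 \<and> 0 \<le> Re (f x) \<and> cmod (f x) \<le> 1)}"

definition order_preserving_on_C1pos :: "(('a::topological_space \<Rightarrow> complex) \<Rightarrow> real) \<Rightarrow> bool" where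
  "order_preserving_on_C1pos \<Delta> \<longleftrightarrow>
     (\<forall>f\<in>C1pos. \<forall>g\<in>C1pos. (\<forall>x. Im (g x - f x) = 0 \<and> 0 \<le> Re (g x - f x)) \<longrightarrow> \<Delta> f \<le> \<Delta> g)"

text \<open>X^d, realised as extensional functions on {0..<d} with the product topology.\<close>
definition XD :: "nat \<Rightarrow> (nat \<Rightarrow> 'a) set" where
  "XD d = PiE {..<d} (\<lambda>_. UNIV)"

text \<open>Elements of M_m(C(X^d)): z \<mapsto> (i,j) \<mapsto> entry, zero outside the index range / domain.\<close>
type_synonym 'a mfun = "(nat \<Rightarrow> 'a) \<Rightarrow> nat \<Rightarrow> nat \<Rightarrow> complex"

definition MC :: "nat \<Rightarrow> nat \<Rightarrow> 'a::topological_space mfun set" where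
  "MC m d = {A. (\<forall>i j. continuous_on (XD d) (\<lambda>z. A z i j)) \<and>
                (\<forall>z i j. z \<notin> XD d \<or> m \<le> i \<or> m \<le> j \<longrightarrow> A z i j = 0)}"

definition madd :: "'a mfun \<Rightarrow> 'a mfun \<Rightarrow> 'a mfun" where
  "madd A B = (\<lambda>z i j. A z i j + B z i j)"

definition mdiff :: "'a mfun \<Rightarrow> 'a mfun \<Rightarrow> 'a mfun" where
  "mdiff A B = (\<lambda>z i j. A z i j - B z i j)"

definition mscale :: "complex \<Rightarrow> 'a mfun \<Rightarrow> 'a mfun" where
  "mscale c A = (\<lambda>z i j. c * A z i j)"

definition mmul :: "nat \<Rightarrow> 'a mfun \<Rightarrow> 'a mfun \<Rightarrow> 'a mfun" where
  "mmul m A B = (\<lambda>z i j. \<Sum>l<m. A z i l * B z l j)"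

definition madj :: "'a mfun \<Rightarrow> 'a mfun" where
  "madj A = (\<lambda>z i j. cnj (A z j i))"

definition munit :: "nat \<Rightarrow> nat \<Rightarrow> 'a mfun" where
  "munit m d = (\<lambda>z i j. if z \<in> XD d \<and> i = j \<and> i < m then 1 else 0)"

definition vecnorm :: "nat \<Rightarrow> (nat \<Rightarrow> complex) \<Rightarrow> real" where
  "vecnorm m v = sqrt (\<Sum>i<m. (cmod (v i))\<^sup>2)"

definition mat_opnorm :: "nat \<Rightarrow> (nat \<Rightarrow> nat \<Rightarrow> complex) \<Rightarrow> real" where
  "mat_opnorm m M = Sup {vecnorm m (\<lambda>i. \<Sum>j<m. M i j * v j) | v. vecnorm m v \<le> 1}"

definition mnorm :: "nat \<Rightarrow> nat \<Rightarrow> 'a mfun \<Rightarrow> real" where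
  "mnorm m d A = Sup ((\<lambda>z. mat_opnorm m (A z)) ` XD d)"

definition tracial_state :: "nat \<Rightarrow> nat \<Rightarrow> ('a::topological_space mfun \<Rightarrow> complex) \<Rightarrow> bool" where
  "tracial_state m d \<tau> \<longleftrightarrow>
     (\<forall>A\<in>MC m d. \<forall>B\<in>MC m d. \<tau> (madd A B) = \<tau> A + \<tau> B) \<and>
     (\<forall>c. \<forall>A\<in>MC m d. \<tau> (mscale c A) = c * \<tau> A) \<and>
     (\<forall>A\<in>MC m d. Im (\<tau> (mmul m (madj A) A)) = 0 \<and> 0 \<le> Re (\<tau> (mmul m (madj A) A))) \<and>
     \<tau> (munit m d) = 1 \<and>
     (\<forall>A\<in>MC m d. \<forall>B\<in>MC m d. \<tau> (mmul m A B) = \<tau> (mmul m B A))"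

definition unitary_el :: "nat \<Rightarrow> nat \<Rightarrow> 'a::topological_space mfun \<Rightarrow> bool" where
  "unitary_el m d u \<longleftrightarrow> u \<in> MC m d \<and> mmul m (madj u) u = munit m d \<and> mmul m u (madj u) = munit m d"

text \<open>The homomorphism f \<mapsto> diag(f\<circ>\<pi>_1,...,f\<circ>\<pi>_n, f(x_1),...,f(x_k)) into M_{n+k}(C(X^d)),
  where \<pi>_i(z) = z (p i) is the coordinate projection onto coordinate p i < d (0-indexed).\<close>
definition diag_hom :: "nat \<Rightarrow> nat \<Rightarrow> nat \<Rightarrow> (nat \<Rightarrow> nat) \<Rightarrow> (nat \<Rightarrow> 'a) \<Rightarrow> ('a \<Rightarrow> complex) \<Rightarrow> 'a mfun" where
  "diag_hom d n k p x f = (\<lambda>z i j. if z \<in> XD d \<and> i = j \<and> i < n + k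
       then (if i < n then f (z (p i)) else f (x (i - n))) else 0)"

end

theory Submission
  imports Defs
begin


lemma hall:
  assumes "finite A" "finite B" "\<And>S. S \<subseteq> A \<Longrightarrow> card S \<le> card {b\<in>B. \<exists>a\<in>S. R a b}"
  shows "\<exists>f. inj_on f A \<and> f ` A \<subseteq> B \<and> (\<forall>a\<in>A. R a (f a))"
  using assms
proof (induction "card A" arbitrary: A B rule: less_induct)
  case less
  show ?case
  proof (cases "A = {}")
    case True then show ?thesis by auto
  next
    case False
    show ?thesis
    proof (cases "\<exists>S. S \<subseteq> A \<and> S \<noteq> {} \<and> S \<noteq> A \<and> card S = card {b\<in>B. \<exists>a\<in>S. R a b}")
      case True
      then obtain S where S: "S \<subseteq> A" "S \<noteq> {}" "S \<noteq> A" "card S = card {b\<in>B. \<exists>a\<in>S. R a b}" by blast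
      define NS where "NS = {b\<in>B. \<exists>a\<in>S. R a b}"
      have fS: "finite S" using S(1) less.prems(1) finite_subset by blast
      have fNS: "finite NS" using less.prems(2) NS_def by auto
      have cS: "card S < card A" using S(1,3) less.prems(1) by (meson psubsetI psubset_card_mono)
      have "\<exists>f. inj_on f S \<and> f ` S \<subseteq> NS \<and> (\<forall>a\<in>S. R a (f a))"
      proof (rule less.hyps[OF cS fS fNS])
        fix S' assume "S' \<subseteq> S"
        then have "{b\<in>NS. \<exists>a\<in>S'. R a b} = {b\<in>B. \<exists>a\<in>S'. R a b}" using NS_def by auto
        then show "card S' \<le> card {b\<in>NS. \<exists>a\<in>S'. R a b}" using less.prems(3) \<open>S' \<subseteq> S\<close> S(1) by auto
      qed
      then obtain f1 where f1: "inj_on f1 S" "f1 ` S \<subseteq> NS" "\<forall>a\<in>S. R a (f1 a)" by blast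
      have cA: "card (A - S) < card A" using S(1,2) less.prems(1) fS
        by (metis Diff_disjoint Diff_partition card_Un_disjoint card_gt_0_iff finite_Diff less_add_same_cancel2)
      have "\<exists>f. inj_on f (A-S) \<and> f ` (A-S) \<subseteq> B - NS \<and> (\<forall>a\<in>A-S. R a (f a))"
      proof (rule less.hyps[OF cA])
        show "finite (A - S)" "finite (B - NS)" using less.prems(1,2) by auto
        fix S' assume S': "S' \<subseteq> A - S"
        have eq: "{b\<in>B-NS. \<exists>a\<in>S'. R a b} = {b\<in>B. \<exists>a\<in>S'\<union>S. R a b} - NS" using NS_def by auto
        have "card (S' \<union> S) \<le> card {b\<in>B. \<exists>a\<in>S'\<union>S. R a b}" using S' S(1) by (intro less.prems(3)) auto
        moreover have "card (S' \<union> S) = card S' + card S"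
        proof (rule card_Un_disjoint)
          show "finite S'" using S' less.prems(1) finite_subset by blast
          show "finite S" by (rule fS)
          show "S' \<inter> S = {}" using S' by auto
        qed
        moreover have "card ({b\<in>B. \<exists>a\<in>S'\<union>S. R a b} - NS) = card {b\<in>B. \<exists>a\<in>S'\<union>S. R a b} - card NS"
          by (rule card_Diff_subset) (use fNS NS_def in auto)
        ultimately show "card S' \<le> card {b\<in>B-NS. \<exists>a\<in>S'. R a b}" using S(4) NS_def eq by simp
      qed
      then obtain f2 where f2: "inj_on f2 (A-S)" "f2 ` (A-S) \<subseteq> B - NS" "\<forall>a\<in>A-S. R a (f2 a)" by blast
      define f where "f a = (if a \<in> S then f1 a else f2 a)" for a
      have "inj_on f A"
        unfolding inj_on_def f_def using f1 f2 NS_def by (smt (verit) DiffD2 Diff_iff image_subset_iff inj_onD)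
      moreover have "f ` A \<subseteq> B" using f1(2) f2(2) NS_def unfolding f_def by auto
      moreover have "\<forall>a\<in>A. R a (f a)" using f1(3) f2(3) unfolding f_def by auto
      ultimately show ?thesis by blast
    next
      case False
      note noeq = False
      obtain a where a: "a \<in> A" using \<open>A \<noteq> {}\<close> by blast
      have "card {a} \<le> card {b\<in>B. \<exists>a'\<in>{a}. R a' b}" using a by (intro less.prems(3)) auto
      then have "{b\<in>B. R a b} \<noteq> {}" by (cases "{b\<in>B. R a b} = {}") auto
      then obtain b where b: "b \<in> B" "R a b" by blast
      have cA: "card (A - {a}) < card A" using a less.prems(1) by (rule card_Diff1_less[rotated])
      have "\<exists>f. inj_on f (A-{a}) \<and> f ` (A-{a}) \<subseteq> B - {b} \<and> (\<forall>a'\<in>A-{a}. R a' (f a'))"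
      proof (rule less.hyps[OF cA])
        show "finite (A - {a})" "finite (B - {b})" using less.prems(1,2) by auto
        fix S' assume S': "S' \<subseteq> A - {a}"
        show "card S' \<le> card {b'\<in>B-{b}. \<exists>a'\<in>S'. R a' b'}"
        proof (cases "S' = {}")
          case True then show ?thesis by simp
        next
          case False
          have "S' \<noteq> A" using S' a by auto
          then have lt: "card S' < card {b\<in>B. \<exists>a\<in>S'. R a b}"
          proof -
            have "S' \<subseteq> A" using S' by auto
            then have "card S' \<noteq> card {b\<in>B. \<exists>a\<in>S'. R a b}" using noeq False \<open>S' \<noteq> A\<close> by blast
            moreover have "card S' \<le> card {b\<in>B. \<exists>a\<in>S'. R a b}" using \<open>S' \<subseteq> A\<close> by (rule less.prems(3))
            ultimately show ?thesis by simp
          qed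
          have "{b'\<in>B-{b}. \<exists>a'\<in>S'. R a' b'} = {b\<in>B. \<exists>a\<in>S'. R a b} - {b}" by auto
          moreover have "card ({b\<in>B. \<exists>a\<in>S'. R a b} - {b}) \<ge> card {b\<in>B. \<exists>a\<in>S'. R a b} - 1"
            by (simp add: card_Diff_singleton_if)
          ultimately show ?thesis using lt by simp
        qed
      qed
      then obtain f2 where f2: "inj_on f2 (A-{a})" "f2 ` (A-{a}) \<subseteq> B - {b}" "\<forall>a'\<in>A-{a}. R a' (f2 a')" by blast
      define f where "f = f2(a := b)"
      have "inj_on f (A - {a})" using f2(1) unfolding f_def inj_on_def by auto
      moreover have "f a \<notin> f ` (A - {a})" using f2(2) unfolding f_def by auto
      ultimately have "inj_on f (insert a (A - {a}))" by (simp only: inj_on_insert) simp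
      then have "inj_on f A" using a by (metis insert_Diff)
      moreover have "f ` A \<subseteq> B" using f2(2) b unfolding f_def by auto
      moreover have "\<forall>a'\<in>A. R a' (f a')" using f2(3) b unfolding f_def by auto
      ultimately show ?thesis by blast
    qed
  qed
qed



definition trc :: "nat \<Rightarrow> (nat \<Rightarrow> 'a) \<Rightarrow> 'a mfun \<Rightarrow> complex" where
  "trc m z A = (\<Sum>i<m. A z i i) / of_nat m"

lemma cnj_mult_self: "cnj a * a = complex_of_real ((cmod a)\<^sup>2)"
  by (metis complex_norm_square mult.commute of_real_power)

lemma tracial_trc:
  assumes "m \<ge> 1" "z \<in> XD d"
  shows "tracial_state m d (trc m z)"
proof -
  have pos: "Im (trc m z (mmul m (madj A) A)) = 0 \<and> 0 \<le> Re (trc m z (mmul m (madj A) A))" for A :: "'a mfun"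
  proof -
    have "trc m z (mmul m (madj A) A) = complex_of_real ((\<Sum>i<m. \<Sum>l<m. (cmod (A z l i))\<^sup>2) / real m)"
      unfolding trc_def mmul_def madj_def by (simp add: cnj_mult_self)
    then show ?thesis by (simp add: sum_nonneg)
  qed
  have tr: "trc m z (mmul m A B) = trc m z (mmul m B A)" for A B :: "'a mfun"
    unfolding trc_def mmul_def using sum.swap[of "\<lambda>i l. A z i l * B z l i" "{..<m}" "{..<m}"]
    by (simp add: mult.commute)
  have un: "trc m z (munit m d) = 1" if "z \<in> XD d"
    using assms that unfolding trc_def munit_def by simp
  show ?thesis
    unfolding tracial_state_def
    apply (intro conjI ballI allI)
    subgoal for A B unfolding trc_def madd_def by (simp add: sum.distrib add_divide_distrib)
    subgoal for c A unfolding trc_def mscale_def by (simp add: sum_distrib_left)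
    subgoal for A using pos by blast
    subgoal for A using pos by blast
    subgoal using un assms by blast
    subgoal for A B using tr by blast
    done
qed

definition zc :: "nat \<Rightarrow> 'a \<Rightarrow> nat \<Rightarrow> 'a" where "zc d c = restrict (\<lambda>_. c) {..<d}"

lemma zc_XD: "zc d c \<in> XD d" unfolding XD_def zc_def by auto

lemma XD_ne: "XD d \<noteq> ({} :: (nat \<Rightarrow> 'a) set)" by (metis empty_iff zc_XD)

lemma sum_split: "(\<Sum>i<n+k. g i) = (\<Sum>i<n. g i) + (\<Sum>j<k. g (n+j))" for g :: "nat \<Rightarrow> complex"
  by (induction k) (auto simp: add.assoc)

lemma trc_diag:
  assumes "\<forall>i<n. p i < d"
  shows "trc (n+k) (zc d c) (diag_hom d n k p x h) = (of_nat n * h c + (\<Sum>j<k. h (x j))) / of_nat (n+k)"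
proof -
  have zp: "\<And>i. i<n \<Longrightarrow> zc d c (p i) = c" using assms by (simp add: zc_def)
  have "(\<Sum>i<n+k. diag_hom d n k p x h (zc d c) i i) = (\<Sum>i<n. diag_hom d n k p x h (zc d c) i i) + (\<Sum>j<k. diag_hom d n k p x h (zc d c) (n+j) (n+j))"
    by (rule sum_split)
  also have "(\<Sum>i<n. diag_hom d n k p x h (zc d c) i i) = (\<Sum>i<n. h c)"
    by (rule sum.cong) (use assms in \<open>auto simp: diag_hom_def zc_XD zp\<close>)
  also have "(\<Sum>j<k. diag_hom d n k p x h (zc d c) (n+j) (n+j)) = (\<Sum>j<k. h (x j))"
    by (rule sum.cong) (auto simp: diag_hom_def zc_XD)
  finally show ?thesis unfolding trc_def by simp
qed

lemma trc_diff: "trc m z (mdiff A B) = trc m z A - trc m z B"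
  unfolding trc_def mdiff_def by (simp add: sum_subtractf diff_divide_distrib)

definition perm_ext :: "nat \<Rightarrow> (nat \<Rightarrow> nat) \<Rightarrow> nat \<Rightarrow> nat" where
  "perm_ext n \<sigma> j = (if j < n then j else n + \<sigma> (j - n))"

lemma perm_ext_bij:
  assumes "bij_betw \<sigma> {..<k} {..<k}"
  shows "bij_betw (perm_ext n \<sigma>) {..<n+k} {..<n+k}"
proof -
  have inj: "inj_on (perm_ext n \<sigma>) {..<n+k}"
  proof (rule inj_onI)
    fix a b assume a: "a \<in> {..<n+k}" and b: "b \<in> {..<n+k}" and e: "perm_ext n \<sigma> a = perm_ext n \<sigma> b"
    have ia: "a \<ge> n \<Longrightarrow> \<sigma> (a - n) < k" "b \<ge> n \<Longrightarrow> \<sigma> (b - n) < k"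
      using a b assms by (auto simp: bij_betw_def)
    show "a = b"
    proof (cases "a < n"; cases "b < n")
      assume "\<not> a < n" "\<not> b < n"
      then have "\<sigma> (a - n) = \<sigma> (b - n)" using e by (simp add: perm_ext_def)
      then have "a - n = b - n" using assms a b \<open>\<not> a < n\<close> \<open>\<not> b < n\<close>
        by (auto simp: bij_betw_def inj_on_def)
      then show ?thesis using \<open>\<not> a < n\<close> \<open>\<not> b < n\<close> by simp
    qed (use e in \<open>auto simp: perm_ext_def\<close>)
  qed
  have "perm_ext n \<sigma> ` {..<n+k} \<subseteq> {..<n+k}"
    using assms by (auto simp: perm_ext_def bij_betw_def)
  then have "perm_ext n \<sigma> ` {..<n+k} = {..<n+k}"
    using inj by (simp add: endo_inj_surj)
  then show ?thesis using inj by (simp add: bij_betw_def)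
qed

definition umat :: "nat \<Rightarrow> nat \<Rightarrow> (nat \<Rightarrow> nat) \<Rightarrow> 'a::topological_space mfun" where
  "umat m d \<pi> = (\<lambda>z i j. if z \<in> XD d \<and> j < m \<and> i = \<pi> j then 1 else 0)"

lemma umat_conj:
  assumes "bij_betw \<pi> {..<m} {..<m}"
  shows "mmul m (mmul m (madj (umat m d \<pi>)) D) (umat m d \<pi>) =
     (\<lambda>z i j. if z \<in> XD d \<and> i < m \<and> j < m then D z (\<pi> i) (\<pi> j) else 0)"
proof (intro ext)
  fix z i j
  have pm: "\<And>i. i < m \<Longrightarrow> \<pi> i < m" using assms by (auto simp: bij_betw_def)
  have inner: "mmul m (madj (umat m d \<pi>)) D z i b = (if z \<in> XD d \<and> i < m then D z (\<pi> i) b else 0)" for b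
  proof -
    have "mmul m (madj (umat m d \<pi>)) D z i b = (\<Sum>l<m. if l = \<pi> i then (if z \<in> XD d \<and> i < m then D z (\<pi> i) b else 0) else 0)"
      unfolding mmul_def madj_def umat_def by (rule sum.cong) auto
    also have "\<dots> = (if z \<in> XD d \<and> i < m then D z (\<pi> i) b else 0)"
      using pm by (auto simp: sum.delta)
    finally show ?thesis .
  qed
  have "mmul m (mmul m (madj (umat m d \<pi>)) D) (umat m d \<pi>) z i j =
     (\<Sum>b<m. if b = \<pi> j then (if z \<in> XD d \<and> i < m \<and> j < m then D z (\<pi> i) (\<pi> j) else 0) else 0)"
    unfolding mmul_def[of m "mmul m _ _"] inner by (rule sum.cong) (auto simp: umat_def)
  also have "\<dots> = (if z \<in> XD d \<and> i < m \<and> j < m then D z (\<pi> i) (\<pi> j) else 0)"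
    using pm by (auto simp: sum.delta)
  finally show "mmul m (mmul m (madj (umat m d \<pi>)) D) (umat m d \<pi>) z i j =
     (if z \<in> XD d \<and> i < m \<and> j < m then D z (\<pi> i) (\<pi> j) else 0)" .
qed

lemma umat_unitary:
  assumes "bij_betw \<pi> {..<m} {..<m}"
  shows "unitary_el m d (umat m d \<pi> :: 'a::topological_space mfun)"
proof -
  have pm: "\<And>i. i < m \<Longrightarrow> \<pi> i < m" using assms by (auto simp: bij_betw_def)
  have inj: "\<And>i j. i < m \<Longrightarrow> j < m \<Longrightarrow> \<pi> i = \<pi> j \<Longrightarrow> i = j"
    using assms by (auto simp: bij_betw_def inj_on_def)
  have surj: "\<And>i. i < m \<Longrightarrow> \<exists>l<m. i = \<pi> l"
    using assms by (metis bij_betw_def imageE lessThan_iff)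
  have MC: "(umat m d \<pi> :: 'a mfun) \<in> MC m d"
    unfolding MC_def
  proof (intro CollectI conjI allI impI)
    fix i j
    show "continuous_on (XD d) (\<lambda>z. (umat m d \<pi> :: 'a mfun) z i j)"
      by (subst continuous_on_cong[OF refl, where g="\<lambda>_. if j < m \<and> i = \<pi> j then 1 else 0"])
         (simp_all add: umat_def)
  next
    fix z :: "nat \<Rightarrow> 'a" and i j assume "z \<notin> XD d \<or> m \<le> i \<or> m \<le> j"
    then show "(umat m d \<pi> :: 'a mfun) z i j = 0" using pm by (auto simp: umat_def not_less[symmetric])
  qed
  have 1: "mmul m (madj (umat m d \<pi>)) (umat m d \<pi>) = (munit m d :: 'a mfun)"
  proof (intro ext)
    fix z :: "nat \<Rightarrow> 'a" and i j
    have "mmul m (madj (umat m d \<pi>)) (umat m d \<pi>) z i j = (\<Sum>l<m. if l = \<pi> i then (if z \<in> XD d \<and> i < m \<and> j < m \<and> \<pi> i = \<pi> j then 1 else 0) else 0)"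
      unfolding mmul_def madj_def umat_def by (rule sum.cong) auto
    also have "\<dots> = (munit m d :: 'a mfun) z i j"
      using pm inj by (auto simp: sum.delta munit_def)
    finally show "mmul m (madj (umat m d \<pi>)) (umat m d \<pi>) z i j = (munit m d :: 'a mfun) z i j" .
  qed
  have 2: "mmul m (umat m d \<pi>) (madj (umat m d \<pi>)) = (munit m d :: 'a mfun)"
  proof (intro ext)
    fix z :: "nat \<Rightarrow> 'a" and i j
    have "mmul m (umat m d \<pi>) (madj (umat m d \<pi>)) z i j = (\<Sum>l\<in>{..<m} \<inter> {l. i = \<pi> l}. if z \<in> XD d \<and> i = j then 1 else 0)"
      unfolding mmul_def madj_def umat_def by (rule sum.mono_neutral_cong_right) auto
    also have "\<dots> = (munit m d :: 'a mfun) z i j"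
    proof (cases "i < m")
      case True
      then obtain l where l: "l < m" "i = \<pi> l" using surj by blast
      then have "{..<m} \<inter> {l. i = \<pi> l} = {l}" using inj pm by auto
      then show ?thesis using True by (simp add: munit_def)
    next
      case False
      then have "{..<m} \<inter> {l. i = \<pi> l} = {}" using pm by auto
      then show ?thesis using False by (simp add: munit_def)
    qed
    finally show "mmul m (umat m d \<pi>) (madj (umat m d \<pi>)) z i j = (munit m d :: 'a mfun) z i j" .
  qed
  show ?thesis unfolding unitary_el_def using MC 1 2 by blast
qed

lemma opnorm_diag:
  assumes "\<And>i j. i \<noteq> j \<Longrightarrow> M i j = 0" "\<And>i. i < m \<Longrightarrow> cmod (M i i) \<le> b" "0 \<le> b"
  shows "mat_opnorm m M \<le> b"
  unfolding mat_opnorm_def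
proof (rule cSup_least)
  show "{vecnorm m (\<lambda>i. \<Sum>j<m. M i j * v j) |v. vecnorm m v \<le> 1} \<noteq> {}"
    by (rule ccontr) (auto simp: vecnorm_def dest: spec[of _ "\<lambda>_. 0"])
next
  fix t assume "t \<in> {vecnorm m (\<lambda>i. \<Sum>j<m. M i j * v j) |v. vecnorm m v \<le> 1}"
  then obtain v where v: "vecnorm m v \<le> 1" and t: "t = vecnorm m (\<lambda>i. \<Sum>j<m. M i j * v j)" by blast
  have s: "(\<Sum>j<m. M i j * v j) = M i i * v i" if "i < m" for i
  proof -
    have "(\<Sum>j<m. M i j * v j) = (\<Sum>j<m. if j = i then M i i * v i else 0)"
      by (rule sum.cong) (use assms(1) in auto)
    then show ?thesis using that by (simp add: sum.delta')
  qed
  have "t = sqrt (\<Sum>i<m. (cmod (M i i * v i))\<^sup>2)"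
    unfolding t vecnorm_def by (simp add: s)
  also have "\<dots> \<le> sqrt (\<Sum>i<m. b\<^sup>2 * (cmod (v i))\<^sup>2)"
  proof (rule real_sqrt_le_mono, rule sum_mono)
    fix i assume "i \<in> {..<m}"
    then have "cmod (M i i) \<le> b" using assms(2) by simp
    then have "(cmod (M i i))\<^sup>2 \<le> b\<^sup>2" by (simp add: power_mono)
    then show "(cmod (M i i * v i))\<^sup>2 \<le> b\<^sup>2 * (cmod (v i))\<^sup>2"
      by (simp add: norm_mult power_mult_distrib mult_right_mono)
  qed
  also have "\<dots> = b * vecnorm m v"
    unfolding vecnorm_def by (simp add: sum_distrib_left[symmetric] real_sqrt_mult assms(3))
  also have "\<dots> \<le> b" using v assms(3) by (simp add: mult_left_le)
  finally show "t \<le> b" .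
qed

lemma mnorm_le:
  assumes "\<And>z. z \<in> XD d \<Longrightarrow> mat_opnorm m (A z) \<le> b"
  shows "mnorm m d A \<le> b"
  unfolding mnorm_def by (rule cSup_least) (use assms XD_ne in auto)



lemma unif_finite:
  assumes "compact (UNIV::'a::metric_space set)" "finite F" "F \<subseteq> (CX :: ('a \<Rightarrow> complex) set)" "e > 0"
  shows "\<exists>\<eta>>0. \<forall>f\<in>F. \<forall>a b. dist a b < \<eta> \<longrightarrow> cmod (f a - f b) < e"
  using assms(2,3)
proof (induction F rule: finite_induct)
  case empty
  then show ?case by (rule_tac x=1 in exI) auto
next
  case (insert f F)
  then obtain \<eta> where \<eta>: "\<eta> > 0" "\<forall>f\<in>F. \<forall>a b. dist a b < \<eta> \<longrightarrow> cmod (f a - f b) < e" by auto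
  have "continuous_on UNIV f" using insert.prems by (auto simp: CX_def)
  then have "uniformly_continuous_on UNIV f" using assms(1) compact_uniformly_continuous by blast
  then obtain d where d: "d > 0" "\<forall>a\<in>UNIV. \<forall>b\<in>UNIV. dist b a < d \<longrightarrow> dist (f b) (f a) < e"
    unfolding uniformly_continuous_on_def using assms(4) by blast
  show ?case
  proof (rule exI[of _ "min \<eta> d"], intro conjI ballI allI impI)
    show "0 < min \<eta> d" using \<eta> d by simp
    fix g and a b :: 'a assume g: "g \<in> insert f F" and ab: "dist a b < min \<eta> d"
    show "cmod (g a - g b) < e"
    proof (cases "g = f")
      case True
      then show ?thesis using d ab by (simp add: dist_norm dist_commute)
    next
      case False
      then show ?thesis using g \<eta> ab by auto
    qed
  qed
qed

lemma finite_cover: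
  assumes "compact (UNIV::'a::metric_space set)" "r > 0"
  shows "\<exists>C. finite (C::'a set) \<and> (\<forall>p. \<exists>c\<in>C. dist c p < r)"
proof -
  have "\<exists>k. finite k \<and> k \<subseteq> (UNIV::'a set) \<and> UNIV \<subseteq> (\<Union>x\<in>k. ball x r)"
    using seq_compact_imp_totally_bounded[OF compact_imp_seq_compact[OF assms(1)], rule_format, OF assms(2)] .
  then obtain C :: "'a set" where "finite C" "C \<subseteq> UNIV" "UNIV \<subseteq> (\<Union>x\<in>C. ball x r)" by blast
  then show ?thesis by (intro exI[of _ C]) (auto simp: ball_def)
qed

lemma conn_pt:
  assumes "connected (UNIV::'a::metric_space set)" "closed A" "A \<noteq> {}" "A \<noteq> (UNIV :: 'a set)" "e > 0"
  shows "\<exists>q. q \<notin> A \<and> infdist q A < e"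
proof (rule ccontr)
  assume "\<not> ?thesis"
  then have "A = {q. infdist q A < e}" using assms(5) by (auto simp: not_less)
  moreover have "open {q. infdist q A < e}"
    by (rule open_Collect_less) (auto intro: continuous_intros)
  ultimately have "open A" by simp
  then have "A = {} \<or> A = UNIV" using assms(1,2) unfolding connected_clopen by auto
  then show False using assms(3,4) by blast
qed

lemma infdist_lt:
  assumes "A \<noteq> {}" "infdist p A < r"
  shows "\<exists>a\<in>A. dist p a < r"
proof (rule ccontr)
  assume "\<not> ?thesis"
  then have "r \<le> infdist p A" unfolding infdist_notempty[OF assms(1)]
    by (intro cINF_greatest assms(1)) (auto simp: not_less)
  then show False using assms(2) by simp
qed



lemma hall_cond:
  fixes x y :: "nat \<Rightarrow> 'a::metric_space" and \<Delta> :: "('a \<Rightarrow> complex) \<Rightarrow> real"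
  assumes C: "finite C" "\<forall>p. \<exists>c\<in>C. dist c p < r" and r: "r > 0" "\<eta> = 3 * r"
    and AT_def: "\<And>T. AT T = {p. \<exists>c\<in>T. dist c p \<le> r}"
    and \<T>_def: "\<T> = {T. T \<subseteq> C \<and> T \<noteq> {} \<and> AT T \<noteq> UNIV}"
    and q\<rho>: "\<forall>T\<in>\<T>. 0 < \<rho>f T \<and> \<rho>f T \<le> r/2 \<and> infdist (qf T) (AT T) < r/2 \<and> (\<forall>a\<in>AT T. \<rho>f T \<le> dist (qf T) a)"
    and hT_def: "\<And>T p. hT T p = max 0 (1 - dist p (qf T) / \<rho>f T)"
    and KR_def: "\<And>T p. KR T p = max (max 0 (1 - infdist p (AT T) / r)) (hT T p)"
    and H0: "\<And>T. T \<in> \<T> \<Longrightarrow> (\<Sum>j<k. hT T (x j)) > real (n+k) * \<Delta>' T"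
    and H1: "\<And>T. T \<in> \<T> \<Longrightarrow> (\<Sum>j<k. KR T (x j)) - (\<Sum>j<k. KR T (y j)) < real (n+k) * \<delta>"
    and dl: "\<And>T. T \<in> \<T> \<Longrightarrow> \<delta> \<le> \<Delta>' T"
    and S: "S \<subseteq> {..<k}"
  shows "card S \<le> card {j\<in>{..<k}. \<exists>i\<in>S. dist (x i) (y j) < \<eta>}"
proof (cases "S = {}")
  case True then show ?thesis by simp
next
  case False
  define NS where "NS = {j\<in>{..<k}. \<exists>i\<in>S. dist (x i) (y j) < \<eta>}"
  define T where "T = {c\<in>C. \<exists>j\<in>S. dist c (x j) < r}"
  have xA: "x j \<in> AT T" if "j \<in> S" for j
  proof -
    obtain c where "c \<in> C" "dist c (x j) < r" using C(2) by blast
    then show ?thesis using that by (auto simp: AT_def T_def intro!: bexI[of _ c])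
  qed
  have Tsub: "T \<subseteq> C" by (auto simp: T_def)
  obtain j0 where j0: "j0 \<in> S" using False by blast
  have Tne: "T \<noteq> {}" using xA[OF j0] by (auto simp: AT_def)
  have close: "\<exists>i\<in>S. dist (x i) a \<le> 2*r" if "a \<in> AT T" for a
  proof -
    have "\<exists>c\<in>T. dist c a \<le> r" using that unfolding AT_def by simp
    then obtain c where c: "c \<in> T" "dist c a \<le> r" by blast
    then obtain i where i: "i \<in> S" "dist c (x i) < r" by (auto simp: T_def)
    have "dist (x i) a \<le> dist (x i) c + dist c a" by (rule dist_triangle)
    also have "\<dots> \<le> 2 * r" using c i by (simp add: dist_commute)
    finally show ?thesis using i by blast
  qed
  show ?thesis
  proof (cases "AT T = UNIV")
    case True
    have "{..<k} \<subseteq> NS"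
    proof
      fix j assume j: "j \<in> {..<k}"
      obtain i where i: "i \<in> S" "dist (x i) (y j) \<le> 2*r" using close[of "y j"] True by auto
      then have "dist (x i) (y j) < \<eta>" using r by linarith
      then show "j \<in> NS" using j i unfolding NS_def by blast
    qed
    then have "NS = {..<k}" by (auto simp: NS_def)
    then show ?thesis using S NS_def card_mono[OF finite_lessThan S] by simp
  next
    case nU: False
    have TT: "T \<in> \<T>" using Tsub Tne nU by (simp add: \<T>_def)
    define A where "A = AT T"
    have Ane: "A \<noteq> {}" using xA[OF j0] A_def by auto
    note qr = q\<rho>[rule_format, OF TT]
    have hA: "hT T a = 0" if "a \<in> A" for a
    proof -
      have "\<rho>f T \<le> dist (qf T) a" using qr that A_def by blast
      then have "1 \<le> dist a (qf T) / \<rho>f T" using qr by (simp add: dist_commute)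
      then show ?thesis by (simp add: hT_def)
    qed
    have h01: "0 \<le> hT T p" for p by (simp add: hT_def)
    have lower: "KR T (x j) \<ge> of_bool (j \<in> S) + hT T (x j)" for j
    proof (cases "j \<in> S")
      case True
      then have "x j \<in> A" using xA A_def by blast
      then show ?thesis using True hA by (simp add: KR_def A_def)
    next
      case False
      then show ?thesis by (simp add: KR_def)
    qed
    have upper: "KR T (y j) \<le> of_bool (j \<in> NS)" if j: "j < k" for j
    proof (cases "KR T (y j) \<le> 0")
      case True then show ?thesis by simp
    next
      case pos: False
      have "infdist (y j) A < r"
      proof (cases "1 - infdist (y j) (AT T) / r > 0")
        case True then show ?thesis using r by (simp add: A_def field_simps)
      next
        case False
        then have "hT T (y j) > 0" using pos by (simp add: KR_def)
        then have "dist (y j) (qf T) / \<rho>f T < 1" by (simp add: hT_def max_def split: if_splits)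
        then have "dist (y j) (qf T) < \<rho>f T" using qr by (simp add: divide_less_eq)
        moreover have "infdist (y j) A \<le> infdist (qf T) A + dist (y j) (qf T)" by (rule infdist_triangle)
        ultimately show ?thesis using qr A_def by simp
      qed
      then obtain a where a: "a \<in> A" "dist (y j) a < r" using infdist_lt Ane by blast
      obtain i where i: "i \<in> S" "dist (x i) a \<le> 2*r" using close a A_def by blast
      have "dist (x i) (y j) \<le> dist (x i) a + dist a (y j)" by (rule dist_triangle)
      then have "dist (x i) (y j) < \<eta>" using a i r by (simp add: dist_commute)
      then have "j \<in> NS" using i j by (auto simp: NS_def)
      moreover have "KR T (y j) \<le> 1" using r qr by (simp add: KR_def hT_def infdist_nonneg)
      ultimately show ?thesis by simp
    qed
    have "real (card S) + (\<Sum>j<k. hT T (x j)) = (\<Sum>j<k. of_bool (j \<in> S) + hT T (x j))"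
    proof -
      have "{..<k} \<inter> S = S" using S by blast
      then show ?thesis by (simp add: sum.distrib)
    qed
    also have "\<dots> \<le> (\<Sum>j<k. KR T (x j))" by (rule sum_mono) (rule lower)
    finally have L: "real (card S) + (\<Sum>j<k. hT T (x j)) \<le> (\<Sum>j<k. KR T (x j))" .
    have "(\<Sum>j<k. KR T (y j)) \<le> (\<Sum>j<k. of_bool (j \<in> NS))" by (rule sum_mono) (use upper in auto)
    also have "\<dots> = real (card NS)"
    proof -
      have "{..<k} \<inter> {j. j \<in> NS} = NS" by (auto simp: NS_def)
      then show ?thesis by simp
    qed
    finally have U: "(\<Sum>j<k. KR T (y j)) \<le> real (card NS)" .
    have "real (card S) < real (card NS) + real (n+k) * \<delta> - real (n+k) * \<Delta>' T"
      using L U H0[OF TT] H1[OF TT] by linarith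
    moreover have "real (n+k) * \<delta> \<le> real (n+k) * \<Delta>' T" using dl[OF TT] by (simp add: mult_left_mono)
    ultimately have "real (card S) < real (card NS) + 1" by linarith
    then show ?thesis by (simp add: NS_def)
  qed
qed

theorem theorem5p1:
  fixes \<Delta> :: "('a::metric_space \<Rightarrow> complex) \<Rightarrow> real"
  assumes "compact (UNIV :: 'a set)"
    and "connected (UNIV :: 'a set)"
    and "\<forall>f\<in>C1pos. 0 < \<Delta> f \<and> \<Delta> f \<le> 1"
    and "order_preserving_on_C1pos \<Delta>"
  shows "\<forall>F \<epsilon>. finite F \<and> F \<subseteq> CX \<and> \<epsilon> > 0 \<longrightarrow>
    (\<exists>H0 H1 \<delta>. finite H0 \<and> H0 \<subseteq> C1pos \<and> (\<forall>h\<in>H0. h \<noteq> (\<lambda>_. 0)) \<and>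
       finite H1 \<and> H1 \<subseteq> C1pos \<and> \<delta> > 0 \<and>
       (\<forall>n k d (p :: nat \<Rightarrow> nat) (x :: nat \<Rightarrow> 'a) (y :: nat \<Rightarrow> 'a).
          1 \<le> n \<and> 1 \<le> k \<and> 1 \<le> d \<and> (\<forall>i<n. p i < d) \<and>
          (\<forall>h\<in>H0. \<forall>\<tau>. tracial_state (n + k) d \<tau> \<longrightarrow>
              Re (\<tau> (diag_hom d n k p x h)) > \<Delta> h \<and> Re (\<tau> (diag_hom d n k p y h)) > \<Delta> h) \<and>
          (\<forall>h\<in>H1. \<forall>\<tau>. tracial_state (n + k) d \<tau> \<longrightarrow>
              cmod (\<tau> (mdiff (diag_hom d n k p x h) (diag_hom d n k p y h))) < \<delta>)
          \<longrightarrow> (\<exists>u. unitary_el (n + k) d u \<and>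
                 (\<forall>f\<in>F. mnorm (n + k) d
                    (mdiff (diag_hom d n k p x f)
                       (mmul (n + k) (mmul (n + k) (madj u) (diag_hom d n k p y f)) u)) < \<epsilon>))))"
proof (intro allI impI)
  fix F :: "('a \<Rightarrow> complex) set" and \<epsilon> :: real
  assume "finite F \<and> F \<subseteq> CX \<and> \<epsilon> > 0"
  then have F: "finite F" "F \<subseteq> CX" "\<epsilon> > 0" by auto
  obtain \<eta> where \<eta>: "\<eta> > 0" "\<forall>f\<in>F. \<forall>a b. dist a b < \<eta> \<longrightarrow> cmod (f a - f b) < \<epsilon>/2"
    using unif_finite[OF assms(1) F(1,2), of "\<epsilon>/2"] F(3) by auto
  define r where "r = \<eta>/3"
  have r: "r > 0" "\<eta> = 3*r" using \<eta>(1) by (auto simp: r_def)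
  obtain C :: "'a set" where C: "finite C" "\<forall>p. \<exists>c\<in>C. dist c p < r"
    using finite_cover[OF assms(1) r(1)] by blast
  define AT where "AT T = {p. \<exists>c\<in>T. dist c p \<le> r}" for T :: "'a set"
  define \<T> where "\<T> = {T. T \<subseteq> C \<and> T \<noteq> {} \<and> AT T \<noteq> UNIV}"
  define P where "P T q \<rho> \<longleftrightarrow> 0 < \<rho> \<and> \<rho> \<le> r/2 \<and> infdist q (AT T) < r/2 \<and> (\<forall>a\<in>AT T. \<rho> \<le> dist q a)"
    for T q \<rho>
  have ex_q: "\<exists>q \<rho>. P T q \<rho>" if "T \<in> \<T>" for T
  proof -
    have fT: "finite T" using that C(1) finite_subset by (auto simp: \<T>_def)
    have "AT T = (\<Union>c\<in>T. cball c r)" by (auto simp: AT_def cball_def)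
    then have cl: "closed (AT T)" using fT by (simp add: closed_UN)
    have "T \<noteq> {}" using that by (simp add: \<T>_def)
    then obtain c where "c \<in> T" by blast
    then have "c \<in> AT T" unfolding AT_def using r by (intro CollectI bexI[of _ c]) auto
    then have ne: "AT T \<noteq> {}" by blast
    have nU: "AT T \<noteq> UNIV" using that by (auto simp: \<T>_def)
    obtain q where q: "q \<notin> AT T" "infdist q (AT T) < r/2"
      using conn_pt[OF assms(2) cl ne nU, of "r/2"] r by auto
    have ip: "infdist q (AT T) > 0" using infdist_pos_not_in_closed[OF cl ne q(1)] .
    show ?thesis unfolding P_def
      apply (rule exI[of _ q], rule exI[of _ "min (r/2) (infdist q (AT T))"])
      using ip q r infdist_le[of _ "AT T" q] by auto
  qed
  define qf where "qf T = (SOME q. \<exists>\<rho>. P T q \<rho>)" for T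
  define \<rho>f where "\<rho>f T = (SOME \<rho>. P T (qf T) \<rho>)" for T
  have Pf: "P T (qf T) (\<rho>f T)" if "T \<in> \<T>" for T
  proof -
    have "\<exists>\<rho>. P T (qf T) \<rho>" unfolding qf_def by (rule someI_ex) (use ex_q[OF that] in blast)
    then show ?thesis unfolding \<rho>f_def by (rule someI_ex)
  qed
  have q\<rho>: "\<forall>T\<in>\<T>. 0 < \<rho>f T \<and> \<rho>f T \<le> r/2 \<and> infdist (qf T) (AT T) < r/2 \<and> (\<forall>a\<in>AT T. \<rho>f T \<le> dist (qf T) a)"
    using Pf unfolding P_def by blast
  define hT where "hT T p = max 0 (1 - dist p (qf T) / \<rho>f T)" for T p
  define KR where "KR T p = max (max 0 (1 - infdist p (AT T) / r)) (hT T p)" for T p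
  define hc where "hc T = (\<lambda>p. complex_of_real (hT T p))" for T
  define Kc where "Kc T = (\<lambda>p. complex_of_real (KR T p))" for T
  define H0 where "H0 = hc ` \<T>"
  define H1 where "H1 = Kc ` \<T>"
  define \<delta> where "\<delta> = Min (insert 1 (\<Delta> ` H0))"
  have fin\<T>: "finite \<T>"
  proof (rule finite_subset)
    show "\<T> \<subseteq> Pow C" by (auto simp: \<T>_def)
  qed (use C(1) in simp)
  have hT01: "0 \<le> hT T p \<and> hT T p \<le> 1" if "T \<in> \<T>" for T p
    using q\<rho> that by (auto simp: hT_def)
  have KR01: "0 \<le> KR T p \<and> KR T p \<le> 1" if "T \<in> \<T>" for T p
    using hT01[OF that, of p] r by (auto simp: KR_def infdist_nonneg)
  have hcC: "hc T \<in> C1pos" if "T \<in> \<T>" for T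
    unfolding C1pos_def hc_def
  proof (intro CollectI conjI allI)
    show "continuous_on UNIV (\<lambda>p. complex_of_real (hT T p))"
      unfolding hT_def using q\<rho> that by (intro continuous_intros) auto
  qed (use hT01[OF that] in auto)
  have KcC: "Kc T \<in> C1pos" if "T \<in> \<T>" for T
    unfolding C1pos_def Kc_def
  proof (intro CollectI conjI allI)
    show "continuous_on UNIV (\<lambda>p. complex_of_real (KR T p))"
      unfolding KR_def hT_def using q\<rho> that r by (intro continuous_intros) auto
  qed (use KR01[OF that] in auto)
  have hcnz: "hc T \<noteq> (\<lambda>_. 0)" if "T \<in> \<T>" for T
  proof
    assume "hc T = (\<lambda>_. 0)"
    then have "hc T (qf T) = 0" by simp
    moreover have "hc T (qf T) = 1" using q\<rho> that by (simp add: hc_def hT_def)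
    ultimately show False by simp
  qed
  have H0C: "H0 \<subseteq> C1pos" using hcC by (auto simp: H0_def)
  have H1C: "H1 \<subseteq> C1pos" using KcC by (auto simp: H1_def)
  have finH0: "finite H0" using fin\<T> by (simp add: H0_def)
  have \<delta>pos: "\<delta> > 0"
    unfolding \<delta>_def using finH0 H0C assms(3) by (subst Min_gr_iff) auto
  have \<delta>le: "\<delta> \<le> \<Delta> (hc T)" if "T \<in> \<T>" for T
    unfolding \<delta>_def using finH0 that by (intro Min_le) (auto simp: H0_def)
  show "\<exists>H0 H1 \<delta>. finite H0 \<and> H0 \<subseteq> C1pos \<and> (\<forall>h\<in>H0. h \<noteq> (\<lambda>_. 0)) \<and>
       finite H1 \<and> H1 \<subseteq> C1pos \<and> \<delta> > 0 \<and>
       (\<forall>n k d (p :: nat \<Rightarrow> nat) (x :: nat \<Rightarrow> 'a) (y :: nat \<Rightarrow> 'a).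
          1 \<le> n \<and> 1 \<le> k \<and> 1 \<le> d \<and> (\<forall>i<n. p i < d) \<and>
          (\<forall>h\<in>H0. \<forall>\<tau>. tracial_state (n + k) d \<tau> \<longrightarrow>
              Re (\<tau> (diag_hom d n k p x h)) > \<Delta> h \<and> Re (\<tau> (diag_hom d n k p y h)) > \<Delta> h) \<and>
          (\<forall>h\<in>H1. \<forall>\<tau>. tracial_state (n + k) d \<tau> \<longrightarrow>
              cmod (\<tau> (mdiff (diag_hom d n k p x h) (diag_hom d n k p y h))) < \<delta>)
          \<longrightarrow> (\<exists>u. unitary_el (n + k) d u \<and>
                 (\<forall>f\<in>F. mnorm (n + k) d
                    (mdiff (diag_hom d n k p x f)
                       (mmul (n + k) (mmul (n + k) (madj u) (diag_hom d n k p y f)) u)) < \<epsilon>)))"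
  proof (rule exI[of _ H0], rule exI[of _ H1], rule exI[of _ \<delta>], intro conjI)
    show "finite H0" by (rule finH0)
    show "H0 \<subseteq> C1pos" by (rule H0C)
    show "\<forall>h\<in>H0. h \<noteq> (\<lambda>_. 0)" using hcnz by (auto simp: H0_def)
    show "finite H1" using fin\<T> by (simp add: H1_def)
    show "H1 \<subseteq> C1pos" by (rule H1C)
    show "\<delta> > 0" by (rule \<delta>pos)
  next
    show "\<forall>n k d (p :: nat \<Rightarrow> nat) (x :: nat \<Rightarrow> 'a) (y :: nat \<Rightarrow> 'a).
          1 \<le> n \<and> 1 \<le> k \<and> 1 \<le> d \<and> (\<forall>i<n. p i < d) \<and>
          (\<forall>h\<in>H0. \<forall>\<tau>. tracial_state (n + k) d \<tau> \<longrightarrow>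
              Re (\<tau> (diag_hom d n k p x h)) > \<Delta> h \<and> Re (\<tau> (diag_hom d n k p y h)) > \<Delta> h) \<and>
          (\<forall>h\<in>H1. \<forall>\<tau>. tracial_state (n + k) d \<tau> \<longrightarrow>
              cmod (\<tau> (mdiff (diag_hom d n k p x h) (diag_hom d n k p y h))) < \<delta>)
          \<longrightarrow> (\<exists>u. unitary_el (n + k) d u \<and>
                 (\<forall>f\<in>F. mnorm (n + k) d
                    (mdiff (diag_hom d n k p x f)
                       (mmul (n + k) (mmul (n + k) (madj u) (diag_hom d n k p y f)) u)) < \<epsilon>))"
  proof (intro allI impI)
    fix n k d and p :: "nat \<Rightarrow> nat" and x y :: "nat \<Rightarrow> 'a"
    assume hyp: "1 \<le> n \<and> 1 \<le> k \<and> 1 \<le> d \<and> (\<forall>i<n. p i < d) \<and>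
          (\<forall>h\<in>H0. \<forall>\<tau>. tracial_state (n + k) d \<tau> \<longrightarrow>
              Re (\<tau> (diag_hom d n k p x h)) > \<Delta> h \<and> Re (\<tau> (diag_hom d n k p y h)) > \<Delta> h) \<and>
          (\<forall>h\<in>H1. \<forall>\<tau>. tracial_state (n + k) d \<tau> \<longrightarrow>
              cmod (\<tau> (mdiff (diag_hom d n k p x h) (diag_hom d n k p y h))) < \<delta>)"
    have pd: "\<forall>i<n. p i < d" using hyp by blast
    define m where "m = n + k"
    have m1: "m \<ge> 1" using hyp by (simp add: m_def)
    have mpos: "real m > 0" using m1 by simp
    have H0x: "(\<Sum>j<k. hT T (x j)) > real (n+k) * \<Delta> (hc T)" if T: "T \<in> \<T>" for T
    proof -
      have "T \<noteq> {}" using T by (simp add: \<T>_def)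
      then obtain c0 where c0: "c0 \<in> T" by blast
      have c0A: "c0 \<in> AT T" unfolding AT_def using r c0 by (intro CollectI bexI[of _ c0]) auto
      have h0: "hT T c0 = 0"
      proof -
        have "\<rho>f T \<le> dist (qf T) c0" using q\<rho> T c0A by blast
        then have "1 \<le> dist c0 (qf T) / \<rho>f T" using q\<rho> T by (simp add: dist_commute)
        then show ?thesis by (simp add: hT_def)
      qed
      define \<tau> where "\<tau> = trc m (zc d c0)"
      have ts: "tracial_state (n+k) d \<tau>" unfolding \<tau>_def m_def
        by (rule tracial_trc) (use m1 m_def zc_XD in auto)
      have "Re (\<tau> (diag_hom d n k p x (hc T))) > \<Delta> (hc T)"
        using hyp ts T by (auto simp: H0_def)
      moreover have "\<tau> (diag_hom d n k p x (hc T)) = complex_of_real ((\<Sum>j<k. hT T (x j)) / real m)"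
        unfolding \<tau>_def m_def trc_diag[OF pd] by (simp add: hc_def h0)
      ultimately have "(\<Sum>j<k. hT T (x j)) / real m > \<Delta> (hc T)" by simp
      then show ?thesis using mpos by (simp add: m_def pos_less_divide_eq mult.commute)
    qed
    have H1x: "(\<Sum>j<k. KR T (x j)) - (\<Sum>j<k. KR T (y j)) < real (n+k) * \<delta>" if T: "T \<in> \<T>" for T
    proof -
      have "T \<noteq> {}" using T by (simp add: \<T>_def)
      then obtain c0 where c0: "c0 \<in> T" by blast
      define \<tau> where "\<tau> = trc m (zc d c0)"
      have ts: "tracial_state (n+k) d \<tau>" unfolding \<tau>_def m_def
        by (rule tracial_trc) (use m1 m_def zc_XD in auto)
      have "cmod (\<tau> (mdiff (diag_hom d n k p x (Kc T)) (diag_hom d n k p y (Kc T)))) < \<delta>"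
        using hyp ts T by (auto simp: H1_def)
      moreover have "\<tau> (mdiff (diag_hom d n k p x (Kc T)) (diag_hom d n k p y (Kc T))) =
          complex_of_real (((\<Sum>j<k. KR T (x j)) - (\<Sum>j<k. KR T (y j))) / real m)"
        unfolding \<tau>_def m_def trc_diff trc_diag[OF pd] by (simp add: Kc_def add_divide_distrib diff_divide_distrib)
      ultimately have "cmod (complex_of_real (((\<Sum>j<k. KR T (x j)) - (\<Sum>j<k. KR T (y j))) / real m)) < \<delta>"
        by (simp only:)
      then have "\<bar>((\<Sum>j<k. KR T (x j)) - (\<Sum>j<k. KR T (y j))) / real m\<bar> < \<delta>"
        by (simp only: norm_of_real)
      then have "((\<Sum>j<k. KR T (x j)) - (\<Sum>j<k. KR T (y j))) / real m < \<delta>" by linarith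
      then show ?thesis using mpos by (simp add: m_def divide_less_eq mult.commute)
    qed
    have HC: "card S \<le> card {j\<in>{..<k}. \<exists>i\<in>S. dist (x i) (y j) < \<eta>}" if "S \<subseteq> {..<k}" for S
      by (rule hall_cond[where \<Delta>'="\<lambda>T. \<Delta> (hc T)", OF C r AT_def \<T>_def q\<rho> hT_def KR_def H0x H1x \<delta>le that])
    obtain \<sigma> where \<sigma>: "inj_on \<sigma> {..<k}" "\<sigma> ` {..<k} \<subseteq> {..<k}" "\<forall>i\<in>{..<k}. dist (x i) (y (\<sigma> i)) < \<eta>"
      using hall[of "{..<k}" "{..<k}" "\<lambda>i j. dist (x i) (y j) < \<eta>"] HC by auto
    have bs: "bij_betw \<sigma> {..<k} {..<k}"
      using \<sigma>(1,2) endo_inj_surj[OF finite_lessThan \<sigma>(2,1)] by (simp add: bij_betw_def)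
    define \<pi> where "\<pi> = perm_ext n \<sigma>"
    have b\<pi>: "bij_betw \<pi> {..<m} {..<m}" unfolding \<pi>_def m_def by (rule perm_ext_bij[OF bs])
    have pm: "\<And>i. i < m \<Longrightarrow> \<pi> i < m" using b\<pi> by (auto simp: bij_betw_def)
    have pinj: "\<And>i j. i < m \<Longrightarrow> j < m \<Longrightarrow> \<pi> i = \<pi> j \<Longrightarrow> i = j"
      using b\<pi> by (auto simp: bij_betw_def inj_on_def)
    define u :: "'a mfun" where "u = umat m d \<pi>"
    show "\<exists>u. unitary_el (n + k) d u \<and>
                 (\<forall>f\<in>F. mnorm (n + k) d
                    (mdiff (diag_hom d n k p x f)
                       (mmul (n + k) (mmul (n + k) (madj u) (diag_hom d n k p y f)) u)) < \<epsilon>)"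
    proof (intro exI[of _ u] conjI ballI)
      show "unitary_el (n + k) d u" unfolding u_def m_def[symmetric] by (rule umat_unitary[OF b\<pi>])
      fix f assume f: "f \<in> F"
      have "mnorm m d (mdiff (diag_hom d n k p x f) (mmul m (mmul m (madj u) (diag_hom d n k p y f)) u)) \<le> \<epsilon>/2"
      proof (rule mnorm_le)
        fix z :: "nat \<Rightarrow> 'a" assume z: "z \<in> XD d"
        let ?M = "mdiff (diag_hom d n k p x f) (mmul m (mmul m (madj u) (diag_hom d n k p y f)) u) z"
        have M: "?M i j = diag_hom d n k p x f z i j - (if i < m \<and> j < m then diag_hom d n k p y f z (\<pi> i) (\<pi> j) else 0)" for i j
          unfolding mdiff_def u_def umat_conj[OF b\<pi>] using z by simp
        show "mat_opnorm m ?M \<le> \<epsilon>/2"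
        proof (rule opnorm_diag)
          show "0 \<le> \<epsilon>/2" using F(3) by simp
          fix i j :: nat assume "i \<noteq> j"
          then show "?M i j = 0" unfolding M using pinj by (auto simp: diag_hom_def)
        next
          fix i assume i: "i < m"
          show "cmod (?M i i) \<le> \<epsilon>/2"
          proof (cases "i < n")
            case True
            then have "\<pi> i = i" by (simp add: \<pi>_def perm_ext_def)
            then show ?thesis unfolding M using i True z F(3) by (simp add: diag_hom_def m_def)
          next
            case False
            have "i - n < k" using i False by (simp add: m_def)
            then have sk: "\<sigma> (i - n) < k" using \<sigma>(2) by blast
            have pi: "\<pi> i = n + \<sigma> (i - n)" using False by (simp add: \<pi>_def perm_ext_def)
            have "?M i i = f (x (i - n)) - f (y (\<sigma> (i - n)))"
              unfolding M using i False z sk pi by (simp add: diag_hom_def m_def)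
            moreover have "dist (x (i - n)) (y (\<sigma> (i - n))) < \<eta>" using \<sigma>(3) i False by (auto simp: m_def)
            ultimately show ?thesis using \<eta>(2) f by fastforce
          qed
        qed
      qed
      then show "mnorm (n + k) d (mdiff (diag_hom d n k p x f)
                       (mmul (n + k) (mmul (n + k) (madj u) (diag_hom d n k p y f)) u)) < \<epsilon>"
        using F(3) unfolding m_def by linarith
    qed
  qed
  qed
qed


end
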